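(* Let $K=2$, $M\ge2$, $N\ge1$, and let $c>0$, $\gamma>0$, $p>0$, $\sigma^2>0$. Define, for $k\in\{1,2\}$, $$\mathrm{SINR}_k^{(NL)}=\frac{p\big(c^2(MN^2+N^2+MN+N)+2c\gamma N(M+1)+\gamma^2(M+1)\big)}{p\big(c^2(N^2+MN)+2c\gamma N+\gamma^2\big)+\sigma^2(cN+\gamma)}$$ and $$\mathrm{SINR}_k^{(w)}=\frac{p(M+1)\gamma}{p\gamma+\sigma^2}.$$ Then $\mathrm{SINR}_k^{(NL)}>\mathrm{SINR}_k^{(w)}$ if and only if $$\frac{p}{\sigma^2}<\frac{N+1}{\gamma(M-1)}+\frac{1}{c(M-1)},$$ equivalently, if and only if $$N>\gamma\Big(\frac{p}{\sigma^2}(M-1)-\frac1c\Big)-1.$$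
   Context: $\mathrm{SINR}_k^{(NL)}$ is the approximate SINR of an RIS-aided massive MIMO system (MRC receiver) with pure-NLoS cascaded channels for two users with equal parameters $c_1=c_2=c$ (cascaded path-loss factor), $\gamma_1=\gamma_2=\gamma$ (direct-link path loss), and $p_1=p_2=p$ (transmit power). $\mathrm{SINR}_k^{(w)}$ is the corresponding approximate SINR without RIS. $M$ is the number of BS antennas, $N$ the number of RIS elements, and $\sigma^2$ the noise power. *)

theory Defs
  imports Complex_Main
begin

text \<open>Approximate SINR with RIS (pure NLoS cascaded channels), equal user parameters.
  Argument s2 is the noise power sigma^2.\<close>
definition SINR_NL :: "nat \<Rightarrow> nat \<Rightarrow> real \<Rightarrow> real \<Rightarrow> real \<Rightarrow> real \<Rightarrow> real" where
  "SINR_NL M N c \<gamma> p s2 =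
     (p * (c^2 * (real M * real N^2 + real N^2 + real M * real N + real N)
           + 2 * c * \<gamma> * real N * (real M + 1) + \<gamma>^2 * (real M + 1)))
     / (p * (c^2 * (real N^2 + real M * real N) + 2 * c * \<gamma> * real N + \<gamma>^2)
        + s2 * (c * real N + \<gamma>))"

definition SINR_w :: "nat \<Rightarrow> real \<Rightarrow> real \<Rightarrow> real \<Rightarrow> real" where
  "SINR_w M \<gamma> p s2 = p * (real M + 1) * \<gamma> / (p * \<gamma> + s2)"

end

theory Submission
  imports Defs
begin

theorem corollary3:
  fixes M N :: nat and c \<gamma> p s2 :: real
  assumes "M \<ge> 2" and "N \<ge> 1"
    and "c > 0" and "\<gamma> > 0" and "p > 0" and "s2 > 0"
  shows "(SINR_NL M N c \<gamma> p s2 > SINR_w M \<gamma> p s2 \<longleftrightarrow>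
            p / s2 < (real N + 1) / (\<gamma> * (real M - 1)) + 1 / (c * (real M - 1)))
       \<and> (SINR_NL M N c \<gamma> p s2 > SINR_w M \<gamma> p s2 \<longleftrightarrow>
            real N > \<gamma> * (p / s2 * (real M - 1) - 1 / c) - 1)"
proof -
  have M1: "real M - 1 > 0" using assms(1) by simp
  have N0: "real N > 0" using assms(2) by simp
  define Q where "Q = c^2 * real N * (real N + 1) + 2*c*\<gamma>*real N + \<gamma>^2"
  define B where "B = p * (c^2 * (real N^2 + real M * real N) + 2 * c * \<gamma> * real N + \<gamma>^2)
        + s2 * (c * real N + \<gamma>)"
  have Bp: "B > 0" unfolding B_def using assms N0 by (intro add_pos_pos mult_pos_pos) (auto intro!: add_pos_pos add_nonneg_pos)
  have Dp: "p*\<gamma> + s2 > 0" using assms by (simp add: add_pos_pos)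
  have NL: "SINR_NL M N c \<gamma> p s2 = p*(real M + 1)*Q / B"
    unfolding SINR_NL_def Q_def B_def by (simp add: algebra_simps power2_eq_square)
  have "SINR_NL M N c \<gamma> p s2 > SINR_w M \<gamma> p s2 \<longleftrightarrow>
        p*(real M + 1)*\<gamma> * B < p*(real M + 1)*Q * (p*\<gamma> + s2)"
    unfolding NL SINR_w_def using Bp Dp by (simp add: divide_simps mult.commute mult.left_commute)
  also have "\<dots> \<longleftrightarrow> \<gamma> * B < Q * (p*\<gamma> + s2)"
    using assms by (simp add: mult.assoc)
  also have "\<dots> \<longleftrightarrow> 0 < c * real N * (s2*(c*(real N + 1) + \<gamma>) - p*\<gamma>*c*(real M - 1))"
  proof -
    have "Q * (p*\<gamma> + s2) - \<gamma> * B = c * real N * (s2*(c*(real N + 1) + \<gamma>) - p*\<gamma>*c*(real M - 1))"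
      unfolding Q_def B_def by (simp add: algebra_simps power2_eq_square)
    then show ?thesis by linarith
  qed
  also have "\<dots> \<longleftrightarrow> p*\<gamma>*c*(real M - 1) < s2*(c*(real N + 1) + \<gamma>)"
  proof -
    have "c * real N > 0" using assms N0 by simp
    then show ?thesis by (metis zero_less_mult_pos mult_pos_pos diff_gt_0_iff_gt)
  qed
  finally have key: "SINR_NL M N c \<gamma> p s2 > SINR_w M \<gamma> p s2 \<longleftrightarrow>
        p*\<gamma>*c*(real M - 1) < s2*(c*(real N + 1) + \<gamma>)" .
  have e1: "p / s2 < (real N + 1) / (\<gamma> * (real M - 1)) + 1 / (c * (real M - 1)) \<longleftrightarrow>
        p*\<gamma>*c*(real M - 1) < s2*(c*(real N + 1) + \<gamma>)"
  proof -
    have g: "\<gamma>*c*(real M - 1) > 0" using assms M1 by simp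
    have "(real N + 1) / (\<gamma> * (real M - 1)) + 1 / (c * (real M - 1))
          = (c*(real N + 1) + \<gamma>) / (\<gamma>*c*(real M - 1))"
    proof -
      have "\<And>m::real. m > 0 \<Longrightarrow> (real N + 1) / (\<gamma> * m) + 1 / (c * m)
          = (c*(real N + 1) + \<gamma>) / (\<gamma>*c*m)" using assms by (simp add: field_simps)
      then show ?thesis using M1 by blast
    qed
    moreover have "p / s2 < (c*(real N + 1) + \<gamma>) / (\<gamma>*c*(real M - 1)) \<longleftrightarrow>
        p * (\<gamma>*c*(real M - 1)) < (c*(real N + 1) + \<gamma>) * s2"
      using g assms by (simp add: divide_simps)
    moreover have "p * (\<gamma>*c*(real M - 1)) = p*\<gamma>*c*(real M - 1)" by (simp add: mult.assoc)
    ultimately show ?thesis by (simp add: mult.commute)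
  qed
  have e2: "real N > \<gamma> * (p / s2 * (real M - 1) - 1 / c) - 1 \<longleftrightarrow>
        p*\<gamma>*c*(real M - 1) < s2*(c*(real N + 1) + \<gamma>)"
    using assms M1 by (simp add: field_simps)
  show ?thesis using key e1 e2 by simp
qed

end
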